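(* Let data $(\bm u^{\mathrm d}(t),\bm y^{\mathrm d}(t))_{t=0}^{T-1}$, $T>1$, each belong to $\mathscr{B}_{\mathrm{DF}}$, and let $H\doteq\begin{bmatrix}\bm u^{\mathrm d}(0) & \cdots & \bm u^{\mathrm d}(T-1)\\ \bm y^{\mathrm d}(0) & \cdots & \bm y^{\mathrm d}(T-1)\end{bmatrix}\in\mathbb{R}^{(6n+1)\times T}$ satisfy $\operatorname{rank}H=3n+1$. Fix $p_\bullet,q_\bullet\in\mathbb{R}^n$ and consider the problem $$\min_{p,q,P,Q,\ell,\mathsf v,\mathsf v_0,g}\ \mathbf 1^\top\ell$$ subject to $\mathsf v\ge 0$, $\mathsf v_0=1$, $\begin{bmatrix}u\\ y\end{bmatrix}=Hg$ with $u=(p,q)$, $y=(P,Q,\ell,\mathsf v,\mathsf v_0)$, $g\in\mathbb{R}^T$; $p\le p_\bullet$ and $q\le q_\bullet$ componentwise; and $P_i^2+Q_i^2\le\mathsf v_i\ell_i$ for all $i\in\mathcal N_+$. Then every optimal solution $(p^\star,q^\star,P^\star,Q^\star,\ell^\star,\mathsf v^\star,\mathsf v_0^\star,g^\star)$ satisfies $P^\star\odot P^\star+Q^\star\odot Q^\star=\mathsf v^\star\odot\ell^\star$, i.e. $(P_i^\star)^2+(Q_i^\star)^2=\mathsf v_i^\star\ell_i^\star$ for all $i\in\mathcal N_+$.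
   Context: Network: a tree with nodes $\mathcal N=\{0,1,\dots,n\}$ rooted at the slack node $0$; $\mathcal N_+=\{1,\dots,n\}$. Each $i\in\mathcal N_+$ has a unique parent $\pi(i)\in\mathcal N$, and the edge $(i,\pi(i))$ carries resistance $\mathtt r_i\ge 0$ and reactance $\mathtt x_i\ge0$ with $\mathtt r_i^2+\mathtt x_i^2\neq 0$. Variables: $p,q,P,Q,\ell,\mathsf v\in\mathbb{R}^n$ indexed by $\mathcal N_+$, and $\mathsf v_0\in\mathbb{R}$. The DistFlow equations are, for every $i\in\mathcal N_+$ with $j=\pi(i)$: (1) $P_i=p_i+\sum_{k:\pi(k)=i}(P_k-\mathtt r_k\ell_k)$; (2) $Q_i=q_i+\sum_{k:\pi(k)=i}(Q_k-\mathtt x_k\ell_k)$; (3) $\mathsf v_j=\mathsf v_i-2(\mathtt r_iP_i+\mathtt x_iQ_i)+(\mathtt r_i^2+\mathtt x_i^2)\ell_i$ (with $\mathsf v_j=\mathsf v_0$ when $j=0$); (4) $\ell_i\mathsf v_i=P_i^2+Q_i^2$. Input $u=(p,q)\in\mathbb{R}^{2n}$, output $y=(P,Q,\ell,\mathsf v,\mathsf v_0)\in\mathbb{R}^{4n+1}$ (vertical stacking in this order). $\mathscr{B}_{\mathrm{DF}}$ is the set of all $(u,y)$ satisfying (1)–(4). $\odot$ is the element-wise product and $\mathbf 1$ the all-ones vector. *)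

theory Defs
  imports Complex_Main
begin

text \<open>A point (u,y) of the DistFlow behaviour: u = (p,q), y = (P,Q,l,v,v0).
  Vectors in R^n are functions on nat, only the indices 1..n being relevant.\<close>
record df_point =
  dp :: "nat \<Rightarrow> real"
  dq :: "nat \<Rightarrow> real"
  dP :: "nat \<Rightarrow> real"
  dQ :: "nat \<Rightarrow> real"
  dl :: "nat \<Rightarrow> real"
  dv :: "nat \<Rightarrow> real"
  dv0 :: real

definition is_tree :: "nat \<Rightarrow> (nat \<Rightarrow> nat) \<Rightarrow> bool" where
  "is_tree n par \<longleftrightarrow> (\<forall>i\<in>{1..n}. par i \<le> n \<and> (\<exists>k. (par ^^ k) i = 0))"

definition volt :: "df_point \<Rightarrow> nat \<Rightarrow> real" where
  "volt z j = (if j = 0 then dv0 z else dv z j)"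

definition in_BDF :: "nat \<Rightarrow> (nat \<Rightarrow> nat) \<Rightarrow> (nat \<Rightarrow> real) \<Rightarrow> (nat \<Rightarrow> real)
    \<Rightarrow> df_point \<Rightarrow> bool" where
  "in_BDF n par r x z \<longleftrightarrow> (\<forall>i\<in>{1..n}.
     dP z i = dp z i + (\<Sum>k\<in>{k\<in>{1..n}. par k = i}. dP z k - r k * dl z k) \<and>
     dQ z i = dq z i + (\<Sum>k\<in>{k\<in>{1..n}. par k = i}. dQ z k - x k * dl z k) \<and>
     volt z (par i) = dv z i - 2 * (r i * dP z i + x i * dQ z i) + ((r i)\<^sup>2 + (x i)\<^sup>2) * dl z i \<and>
     dl z i * dv z i = (dP z i)\<^sup>2 + (dQ z i)\<^sup>2)"

definition stack :: "nat \<Rightarrow> df_point \<Rightarrow> nat \<Rightarrow> real" where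
  "stack n z r =
    (if r < n then dp z (r + 1)
     else if r < 2*n then dq z (r - n + 1)
     else if r < 3*n then dP z (r - 2*n + 1)
     else if r < 4*n then dQ z (r - 3*n + 1)
     else if r < 5*n then dl z (r - 4*n + 1)
     else if r < 6*n then dv z (r - 5*n + 1)
     else dv0 z)"

text \<open>Rank (column rank) of the m x T matrix with columns col 0, ..., col (T-1),
  where column t has entries col t 0, ..., col t (m-1).\<close>
definition cols_lin_indep :: "nat \<Rightarrow> (nat \<Rightarrow> nat \<Rightarrow> real) \<Rightarrow> nat set \<Rightarrow> bool" where
  "cols_lin_indep m col S \<longleftrightarrow>
     (\<forall>c. (\<forall>r<m. (\<Sum>t\<in>S. c t * col t r) = 0) \<longrightarrow> (\<forall>t\<in>S. c t = 0))"

definition mat_rank :: "nat \<Rightarrow> nat \<Rightarrow> (nat \<Rightarrow> nat \<Rightarrow> real) \<Rightarrow> nat" where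
  "mat_rank m T col = Max {card S | S. S \<subseteq> {..<T} \<and> cols_lin_indep m col S}"

definition feasible :: "nat \<Rightarrow> nat \<Rightarrow> (nat \<Rightarrow> df_point) \<Rightarrow> (nat \<Rightarrow> real) \<Rightarrow> (nat \<Rightarrow> real)
    \<Rightarrow> df_point \<Rightarrow> (nat \<Rightarrow> real) \<Rightarrow> bool" where
  "feasible n T d pb qb z g \<longleftrightarrow>
     (\<forall>i\<in>{1..n}. dv z i \<ge> 0) \<and> dv0 z = 1 \<and>
     (\<forall>r<6*n+1. stack n z r = (\<Sum>t<T. g t * stack n (d t) r)) \<and>
     (\<forall>i\<in>{1..n}. dp z i \<le> pb i \<and> dq z i \<le> qb i) \<and>
     (\<forall>i\<in>{1..n}. (dP z i)\<^sup>2 + (dQ z i)\<^sup>2 \<le> dv z i * dl z i)"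

definition objective :: "nat \<Rightarrow> df_point \<Rightarrow> real" where
  "objective n z = (\<Sum>i=1..n. dl z i)"

end

theory Submission
  imports Defs "HOL-Library.Function_Algebras"
begin


definition scl :: "real \<Rightarrow> (nat \<Rightarrow> real) \<Rightarrow> (nat \<Rightarrow> real)" where
  "scl c f = (\<lambda>i. c * f i)"

interpretation fv: vector_space scl
  by unfold_locales (auto simp: scl_def fun_eq_iff algebra_simps)

lemma sum_fun_apply: "(\<Sum>x\<in>A. (F x :: nat \<Rightarrow> real)) i = (\<Sum>x\<in>A. F x i)"
  by (induction A rule: infinite_finite_induct) auto

lemma span_lemma:
  fixes a :: "nat \<Rightarrow> nat \<Rightarrow> real" and S :: "nat set"
  assumes fin: "finite S" and card: "card S = m"
    and ind: "\<forall>c. (\<forall>j<m. (\<Sum>t\<in>S. c t * a t j) = 0) \<longrightarrow> (\<forall>t\<in>S. c t = 0)"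
  shows "\<exists>c. \<forall>j<m. b j = (\<Sum>t\<in>S. c t * a t j)"
proof -
  define tr where "tr f = (\<lambda>j. if j < m then f j else (0::real))" for f :: "nat \<Rightarrow> real"
  define v where "v t = tr (a t)" for t
  define e where "e j = (\<lambda>i. if i = j then 1 else (0::real))" for j :: nat
  define E where "E = e ` {..<m}"
  have injv: "inj_on v S"
  proof (rule inj_onI, rule ccontr)
    fix s t assume st: "s \<in> S" "t \<in> S" "v s = v t" "s \<noteq> t"
    define c where "c u = (if u = s then 1 else if u = t then -1 else (0::real))" for u
    have "\<forall>j<m. (\<Sum>u\<in>S. c u * a u j) = 0"
    proof (intro allI impI)
      fix j assume j: "j < m"
      have "(\<Sum>u\<in>S. c u * a u j) = (\<Sum>u\<in>S. (if u = s then a s j else 0) - (if u = t then a t j else 0))"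
        by (rule sum.cong) (auto simp: c_def st(4))
      also have "\<dots> = a s j - a t j" using st fin by (simp add: sum_subtractf)
      also have "\<dots> = 0" using st(3) j unfolding v_def tr_def by (metis diff_self)
      finally show "(\<Sum>u\<in>S. c u * a u j) = 0" .
    qed
    with ind st have "c s = 0" by blast
    then show False by (simp add: c_def)
  qed
  have sumv: "(\<Sum>w\<in>v ` S. scl (f w) w) = (\<Sum>t\<in>S. scl (f (v t)) (v t))" for f
    by (simp add: sum.reindex[OF injv])
  have indep: "fv.independent (v ` S)"
  proof (rule fv.independent_if_scalars_zero)
    show "finite (v ` S)" using fin by simp
    fix f x assume s0: "(\<Sum>x\<in>v ` S. scl (f x) x) = 0" and x: "x \<in> v ` S"
    have "\<forall>j<m. (\<Sum>t\<in>S. f (v t) * a t j) = 0"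
    proof (intro allI impI)
      fix j assume j: "j < m"
      have "0 = (\<Sum>t\<in>S. scl (f (v t)) (v t)) j" using s0 sumv by simp
      also have "\<dots> = (\<Sum>t\<in>S. f (v t) * a t j)" using j by (simp add: sum_fun_apply scl_def v_def tr_def)
      finally show "(\<Sum>t\<in>S. f (v t) * a t j) = 0" by simp
    qed
    with ind x show "f x = 0" by auto
  qed
  have inE: "tr f \<in> fv.span E" for f
  proof -
    have "tr f = (\<Sum>j\<in>{..<m}. scl (f j) (e j))"
      proof (rule ext)
      fix x
      have "(\<Sum>j<m. f j * (if x = j then 1 else 0)) = (\<Sum>j<m. if x = j then f j else 0)"
        by (rule sum.cong) auto
      then show "tr f x = (\<Sum>j\<in>{..<m}. scl (f j) (e j)) x"
        unfolding sum_fun_apply tr_def scl_def e_def by simp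
    qed
    also have "\<dots> \<in> fv.span E" unfolding E_def
      by (intro fv.span_sum fv.span_scale fv.span_base) auto
    finally show ?thesis .
  qed
  have "tr b \<in> fv.span (v ` S)"
  proof (rule ccontr)
    assume nb: "tr b \<notin> fv.span (v ` S)"
    then have i2: "fv.independent (insert (tr b) (v ` S))" using indep fv.independent_insertI by blast
    have sub: "insert (tr b) (v ` S) \<subseteq> fv.span E" unfolding v_def using inE by blast
    have "card (insert (tr b) (v ` S)) \<le> card E"
      proof -
      have "finite E" unfolding E_def by simp
      then show ?thesis using fv.independent_span_bound[OF _ i2 sub] by blast
    qed
    moreover have "card E \<le> m" unfolding E_def using card_image_le by fastforce
    moreover have "card (insert (tr b) (v ` S)) = m + 1"
      proof -
      have "tr b \<notin> v ` S" using nb fv.span_base by blast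
      then have "card (insert (tr b) (v ` S)) = Suc (card (v ` S))" using fin by simp
      then show ?thesis using card_image[OF injv] card by simp
    qed
    ultimately show False by simp
  qed
  then obtain u where u: "tr b = (\<Sum>w\<in>v ` S. scl (u w) w)"
    using fv.span_finite[of "v ` S"] fin by auto
  show ?thesis
  proof (intro exI allI impI)
    fix j assume j: "j < m"
    have "b j = tr b j" using j by (simp add: tr_def)
    also have "\<dots> = (\<Sum>t\<in>S. scl (u (v t)) (v t)) j" using u sumv by simp
    also have "\<dots> = (\<Sum>t\<in>S. u (v t) * a t j)" using j by (simp add: sum_fun_apply scl_def v_def tr_def)
    finally show "b j = (\<Sum>t\<in>S. u (v t) * a t j)" .
  qed
qed


definition lin_df :: "nat \<Rightarrow> (nat \<Rightarrow> nat) \<Rightarrow> (nat \<Rightarrow> real) \<Rightarrow> (nat \<Rightarrow> real) \<Rightarrow> df_point \<Rightarrow> bool" where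
  "lin_df n par r x z \<longleftrightarrow> (\<forall>i\<in>{1..n}.
     dP z i = dp z i + (\<Sum>k\<in>{k\<in>{1..n}. par k = i}. dP z k - r k * dl z k) \<and>
     dQ z i = dq z i + (\<Sum>k\<in>{k\<in>{1..n}. par k = i}. dQ z k - x k * dl z k) \<and>
     volt z (par i) = dv z i - 2 * (r i * dP z i + x i * dQ z i) + ((r i)\<^sup>2 + (x i)\<^sup>2) * dl z i)"

lemma in_BDF_lin: "in_BDF n par r x z \<Longrightarrow> lin_df n par r x z"
  unfolding in_BDF_def lin_df_def by blast

definition depth :: "(nat \<Rightarrow> nat) \<Rightarrow> nat \<Rightarrow> nat" where
  "depth par i = (LEAST k. (par ^^ k) i = 0)"

lemma depth_par:
  assumes tree: "is_tree n par" and i: "i \<in> {1..n}"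
  shows "depth par i = Suc (depth par (par i))"
proof -
  obtain k where k: "(par ^^ k) i = 0" using tree i unfolding is_tree_def by blast
  have d0: "(par ^^ depth par i) i = 0" unfolding depth_def using k by (rule LeastI)
  have "depth par i \<noteq> 0"
  proof
    assume "depth par i = 0"
    then have "i = 0" using d0 by simp
    with i show False by simp
  qed
  then obtain m where m: "depth par i = Suc m" by (cases "depth par i") auto
  have "(par ^^ m) (par i) = 0" using d0 m by (metis comp_apply funpow_Suc_right)
  then have le1: "depth par (par i) \<le> m" unfolding depth_def by (rule Least_le)
  have "(par ^^ depth par (par i)) (par i) = 0" unfolding depth_def
    using \<open>(par ^^ m) (par i) = 0\<close> by (rule LeastI)
  then have "(par ^^ Suc (depth par (par i))) i = 0" by (metis comp_apply funpow_Suc_right)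
  then have "depth par i \<le> Suc (depth par (par i))" unfolding depth_def by (rule Least_le)
  with le1 m show ?thesis by simp
qed

lemma tree_down:
  assumes tree: "is_tree n par"
    and X: "\<forall>i\<in>{1..n}. X i = (\<Sum>k\<in>{k\<in>{1..n}. par k = i}. (X k :: real))"
  shows "\<forall>i\<in>{1..n}. X i = 0"
proof -
  define D where "D = Max (depth par ` {1..n})"
  have "i \<in> {1..n} \<longrightarrow> X i = 0" for i
  proof (induction i rule: measure_induct_rule[where f = "\<lambda>i. D - depth par i"])
    case (less i)
    show ?case
    proof
      assume i: "i \<in> {1..n}"
      have "X k = 0" if k: "k \<in> {k\<in>{1..n}. par k = i}" for k
      proof -
        have "depth par k = Suc (depth par i)" using depth_par[OF tree] k by auto
        moreover have "depth par k \<le> D" unfolding D_def using k by auto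
        ultimately have "D - depth par k < D - depth par i" by simp
        then show ?thesis using less k by blast
      qed
      then have "(\<Sum>k\<in>{k\<in>{1..n}. par k = i}. X k) = 0" by (intro sum.neutral) blast
      moreover have "X i = (\<Sum>k\<in>{k\<in>{1..n}. par k = i}. X k)" using X i by blast
      ultimately show "X i = 0" by simp
    qed
  qed
  then show ?thesis by blast
qed

lemma tree_up:
  assumes tree: "is_tree n par"
    and Y: "\<forall>i\<in>{1..n}. Y i = (if par i = 0 then 0 else (Y (par i) :: real))"
  shows "\<forall>i\<in>{1..n}. Y i = 0"
proof -
  have "i \<in> {1..n} \<longrightarrow> Y i = 0" for i
  proof (induction i rule: measure_induct_rule[where f = "depth par"])
    case (less i)
    show ?case
    proof
      assume i: "i \<in> {1..n}"
      show "Y i = 0"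
      proof (cases "par i = 0")
        case True then show ?thesis using Y i by simp
      next
        case False
        have "par i \<le> n" using tree i unfolding is_tree_def by blast
        then have "par i \<in> {1..n}" using False by simp
        moreover have "depth par (par i) < depth par i" using depth_par[OF tree i] by simp
        ultimately have "Y (par i) = 0" using less by blast
        then show ?thesis using Y i False by simp
      qed
    qed
  qed
  then show ?thesis by blast
qed

lemma lin_unique:
  assumes tree: "is_tree n par" and lin: "lin_df n par r x w"
    and z: "\<forall>i\<in>{1..n}. dp w i = 0 \<and> dq w i = 0 \<and> dl w i = 0" and z0: "dv0 w = 0"
  shows "\<forall>i\<in>{1..n}. dP w i = 0 \<and> dQ w i = 0 \<and> dv w i = 0"
proof -
  have P: "\<forall>i\<in>{1..n}. dP w i = 0"
    by (rule tree_down[OF tree]) (use lin z in \<open>auto simp: lin_df_def\<close>)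
  have Q: "\<forall>i\<in>{1..n}. dQ w i = 0"
    by (rule tree_down[OF tree]) (use lin z in \<open>auto simp: lin_df_def\<close>)
  have V: "\<forall>i\<in>{1..n}. dv w i = 0"
  proof (rule tree_up[OF tree], intro ballI)
    fix i assume i: "i \<in> {1..n}"
    have "volt w (par i) = dv w i" using lin i P Q z unfolding lin_df_def by auto
    then show "dv w i = (if par i = 0 then 0 else dv w (par i))"
      using z0 by (auto simp: volt_def split: if_splits)
  qed
  show ?thesis using P Q V by blast
qed

definition comb :: "(nat \<Rightarrow> real) \<Rightarrow> nat set \<Rightarrow> (nat \<Rightarrow> df_point) \<Rightarrow> df_point" where
  "comb c S d = \<lparr>dp = \<lambda>i. \<Sum>t\<in>S. c t * dp (d t) i, dq = \<lambda>i. \<Sum>t\<in>S. c t * dq (d t) i,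
     dP = \<lambda>i. \<Sum>t\<in>S. c t * dP (d t) i, dQ = \<lambda>i. \<Sum>t\<in>S. c t * dQ (d t) i,
     dl = \<lambda>i. \<Sum>t\<in>S. c t * dl (d t) i, dv = \<lambda>i. \<Sum>t\<in>S. c t * dv (d t) i,
     dv0 = \<Sum>t\<in>S. c t * dv0 (d t)\<rparr>"

definition diffp :: "df_point \<Rightarrow> df_point \<Rightarrow> df_point" where
  "diffp a b = \<lparr>dp = \<lambda>i. dp a i - dp b i, dq = \<lambda>i. dq a i - dq b i,
     dP = \<lambda>i. dP a i - dP b i, dQ = \<lambda>i. dQ a i - dQ b i,
     dl = \<lambda>i. dl a i - dl b i, dv = \<lambda>i. dv a i - dv b i, dv0 = dv0 a - dv0 b\<rparr>"

lemma stack_comb: "stack n (comb c S d) \<rho> = (\<Sum>t\<in>S. c t * stack n (d t) \<rho>)"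
  unfolding stack_def comb_def by simp

lemma stack_diff: "stack n (diffp a b) \<rho> = stack n a \<rho> - stack n b \<rho>"
  unfolding stack_def diffp_def by simp

lemma volt_comb: "volt (comb c S d) j = (\<Sum>t\<in>S. c t * volt (d t) j)"
  unfolding volt_def comb_def by simp

lemma volt_diff: "volt (diffp a b) j = volt a j - volt b j"
  unfolding volt_def diffp_def by simp

lemma lin_diff: "lin_df n par r x a \<Longrightarrow> lin_df n par r x b \<Longrightarrow> lin_df n par r x (diffp a b)"
  unfolding lin_df_def
proof (intro ballI conjI)
  fix i assume a: "\<forall>i\<in>{1..n}.
     dP a i = dp a i + (\<Sum>k\<in>{k\<in>{1..n}. par k = i}. dP a k - r k * dl a k) \<and>
     dQ a i = dq a i + (\<Sum>k\<in>{k\<in>{1..n}. par k = i}. dQ a k - x k * dl a k) \<and>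
     volt a (par i) = dv a i - 2 * (r i * dP a i + x i * dQ a i) + ((r i)\<^sup>2 + (x i)\<^sup>2) * dl a i"
   and b: "\<forall>i\<in>{1..n}.
     dP b i = dp b i + (\<Sum>k\<in>{k\<in>{1..n}. par k = i}. dP b k - r k * dl b k) \<and>
     dQ b i = dq b i + (\<Sum>k\<in>{k\<in>{1..n}. par k = i}. dQ b k - x k * dl b k) \<and>
     volt b (par i) = dv b i - 2 * (r i * dP b i + x i * dQ b i) + ((r i)\<^sup>2 + (x i)\<^sup>2) * dl b i"
   and i: "i \<in> {1..n}"
  let ?K = "{k\<in>{1..n}. par k = i}"
  note ai = a[rule_format, OF i] and bi = b[rule_format, OF i]
  show "dP (diffp a b) i = dp (diffp a b) i + (\<Sum>k\<in>?K. dP (diffp a b) k - r k * dl (diffp a b) k)"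
    using ai bi unfolding diffp_def by (simp add: sum_subtractf[symmetric] algebra_simps)
  show "dQ (diffp a b) i = dq (diffp a b) i + (\<Sum>k\<in>?K. dQ (diffp a b) k - x k * dl (diffp a b) k)"
    using ai bi unfolding diffp_def by (simp add: sum_subtractf[symmetric] algebra_simps)
  show "volt (diffp a b) (par i) = dv (diffp a b) i - 2 * (r i * dP (diffp a b) i + x i * dQ (diffp a b) i) + ((r i)\<^sup>2 + (x i)\<^sup>2) * dl (diffp a b) i"
  proof -
    have va: "volt a (par i) = dv a i - 2 * (r i * dP a i + x i * dQ a i) + ((r i)\<^sup>2 + (x i)\<^sup>2) * dl a i"
      using ai by blast
    have vb: "volt b (par i) = dv b i - 2 * (r i * dP b i + x i * dQ b i) + ((r i)\<^sup>2 + (x i)\<^sup>2) * dl b i"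
      using bi by blast
    show ?thesis unfolding volt_diff va vb unfolding diffp_def by (simp add: algebra_simps)
  qed
qed

lemma lin_comb:
  assumes "\<forall>t\<in>S. lin_df n par r x (d t)"
  shows "lin_df n par r x (comb c S d)"
  unfolding lin_df_def
proof (intro ballI conjI)
  fix i assume i: "i \<in> {1..n}"
  let ?K = "{k\<in>{1..n}. par k = i}"
  have e1: "\<forall>t\<in>S. dP (d t) i = dp (d t) i + (\<Sum>k\<in>?K. dP (d t) k - r k * dl (d t) k)"
   and e2: "\<forall>t\<in>S. dQ (d t) i = dq (d t) i + (\<Sum>k\<in>?K. dQ (d t) k - x k * dl (d t) k)"
   and e3: "\<forall>t\<in>S. volt (d t) (par i) = dv (d t) i - 2 * (r i * dP (d t) i + x i * dQ (d t) i) + ((r i)\<^sup>2 + (x i)\<^sup>2) * dl (d t) i"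
    using assms i unfolding lin_df_def by auto
  have "dP (comb c S d) i = (\<Sum>t\<in>S. c t * (dp (d t) i + (\<Sum>k\<in>?K. dP (d t) k - r k * dl (d t) k)))"
    unfolding comb_def using e1 by simp
  also have "\<dots> = dp (comb c S d) i + (\<Sum>k\<in>?K. dP (comb c S d) k - r k * dl (comb c S d) k)"
    unfolding comb_def by (simp add: sum.distrib sum_distrib_left sum_subtractf algebra_simps sum.swap[of _ S])
  finally show "dP (comb c S d) i = dp (comb c S d) i + (\<Sum>k\<in>?K. dP (comb c S d) k - r k * dl (comb c S d) k)" .
  have "dQ (comb c S d) i = (\<Sum>t\<in>S. c t * (dq (d t) i + (\<Sum>k\<in>?K. dQ (d t) k - x k * dl (d t) k)))"
    unfolding comb_def using e2 by simp
  also have "\<dots> = dq (comb c S d) i + (\<Sum>k\<in>?K. dQ (comb c S d) k - x k * dl (comb c S d) k)"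
    unfolding comb_def by (simp add: sum.distrib sum_distrib_left sum_subtractf algebra_simps sum.swap[of _ S])
  finally show "dQ (comb c S d) i = dq (comb c S d) i + (\<Sum>k\<in>?K. dQ (comb c S d) k - x k * dl (comb c S d) k)" .
  have "volt (comb c S d) (par i) = (\<Sum>t\<in>S. c t * (dv (d t) i - 2 * (r i * dP (d t) i + x i * dQ (d t) i) + ((r i)\<^sup>2 + (x i)\<^sup>2) * dl (d t) i))"
    unfolding volt_comb using e3 by simp
  also have "\<dots> = dv (comb c S d) i - 2 * (r i * dP (comb c S d) i + x i * dQ (comb c S d) i) + ((r i)\<^sup>2 + (x i)\<^sup>2) * dl (comb c S d) i"
    unfolding comb_def by (simp add: sum.distrib sum_distrib_left sum_subtractf algebra_simps)
  finally show "volt (comb c S d) (par i) = dv (comb c S d) i - 2 * (r i * dP (comb c S d) i + x i * dQ (comb c S d) i) + ((r i)\<^sup>2 + (x i)\<^sup>2) * dl (comb c S d) i" .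
qed



definition Lp :: "nat \<Rightarrow> df_point \<Rightarrow> nat \<Rightarrow> real" where
  "Lp n w j = (if j < n then dp w (j+1) else if j < 2*n then dq w (j-n+1)
     else if j < 3*n then dl w (j-2*n+1) else dv0 w)"

lemma Lp_comb: "Lp n (comb c S d) j = (\<Sum>t\<in>S. c t * Lp n (d t) j)"
  unfolding Lp_def comb_def by simp

lemma Lp_diff: "Lp n (diffp a b) j = Lp n a j - Lp n b j"
  unfolding Lp_def diffp_def by simp

lemma Lp_zero:
  assumes "\<forall>j<3*n+1. Lp n w j = 0"
  shows "\<forall>i\<in>{1..n}. dp w i = 0 \<and> dq w i = 0 \<and> dl w i = 0" "dv0 w = 0"
proof -
  show "\<forall>i\<in>{1..n}. dp w i = 0 \<and> dq w i = 0 \<and> dl w i = 0"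
  proof
    fix i assume i: "i \<in> {1..n}"
    have "Lp n w (i-1) = 0" "Lp n w (n+i-1) = 0" "Lp n w (2*n+i-1) = 0" using assms i by auto
    moreover have "Lp n w (i-1) = dp w i"
    proof -
      have "i - 1 < n" "i - 1 + 1 = i" using i by auto
      then show ?thesis unfolding Lp_def by simp
    qed
    moreover have "Lp n w (n+i-1) = dq w i"
    proof -
      have "\<not> n+i - 1 < n" "n + i - 1 < 2*n" "n+i-1-n+1 = i" using i by auto
      then show ?thesis unfolding Lp_def by simp
    qed
    moreover have "Lp n w (2*n+i-1) = dl w i"
    proof -
      have "\<not> 2*n+i - 1 < n" "\<not> 2*n + i - 1 < 2*n" "2*n+i-1 < 3*n" "2*n+i-1-2*n+1 = i" using i by auto
      then show ?thesis unfolding Lp_def by simp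
    qed
    ultimately show "dp w i = 0 \<and> dq w i = 0 \<and> dl w i = 0" by simp
  qed
  have "Lp n w (3*n) = 0" using assms by auto
  then show "dv0 w = 0" unfolding Lp_def by simp
qed

lemma stack_zero:
  assumes "\<forall>i\<in>{1..n}. dp w i = 0 \<and> dq w i = 0 \<and> dl w i = 0" "dv0 w = 0"
    "\<forall>i\<in>{1..n}. dP w i = 0 \<and> dQ w i = 0 \<and> dv w i = 0"
  shows "stack n w \<rho> = 0"
  using assms unfolding stack_def by auto

lemma span_df:
  assumes tree: "is_tree n par"
    and data: "\<forall>t<T. lin_df n par r x (d t)"
    and rank: "mat_rank (6*n+1) T (\<lambda>t. stack n (d t)) = 3*n+1"
    and lin: "lin_df n par r x w"
  shows "\<exists>h. \<forall>\<rho><6*n+1. stack n w \<rho> = (\<Sum>t<T. h t * stack n (d t) \<rho>)"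
proof -
  let ?M = "{card S | S. S \<subseteq> {..<T} \<and> cols_lin_indep (6*n+1) (\<lambda>t. stack n (d t)) S}"
  have "?M \<subseteq> card ` Pow {..<T}" by auto
  then have finM: "finite ?M" by (rule finite_subset) simp
  have "{} \<subseteq> {..<T} \<and> cols_lin_indep (6*n+1) (\<lambda>t. stack n (d t)) {}"
    by (simp add: cols_lin_indep_def)
  then have "card ({}::nat set) \<in> ?M" by (intro CollectI exI[where x="{}::nat set"]) simp
  then have "?M \<noteq> {}" by blast
  from Max_in[OF finM this] rank obtain S where S: "S \<subseteq> {..<T}"
    "cols_lin_indep (6*n+1) (\<lambda>t. stack n (d t)) S" "card S = 3*n+1"
    unfolding mat_rank_def by auto
  have finS: "finite S" using S(1) finite_subset by blast
  have linS: "\<forall>t\<in>S. lin_df n par r x (d t)" using S(1) data by auto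
  have ind: "\<forall>c. (\<forall>j<3*n+1. (\<Sum>t\<in>S. c t * Lp n (d t) j) = 0) \<longrightarrow> (\<forall>t\<in>S. c t = 0)"
  proof (intro allI impI)
    fix c assume c: "\<forall>j<3*n+1. (\<Sum>t\<in>S. c t * Lp n (d t) j) = 0"
    let ?F = "comb c S d"
    have lF: "lin_df n par r x ?F" using lin_comb linS by blast
    have "\<forall>j<3*n+1. Lp n ?F j = 0" using c Lp_comb by simp
    note z = Lp_zero[OF this]
    note u = lin_unique[OF tree lF z]
    have "\<forall>\<rho><6*n+1. (\<Sum>t\<in>S. c t * stack n (d t) \<rho>) = 0"
      using stack_zero[OF z u] stack_comb by metis
    then show "\<forall>t\<in>S. c t = 0" using S(2) unfolding cols_lin_indep_def by blast
  qed
  obtain c where c: "\<forall>j<3*n+1. Lp n w j = (\<Sum>t\<in>S. c t * Lp n (d t) j)"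
    using span_lemma[OF finS S(3) ind] by blast
  let ?F = "comb c S d"
  let ?G = "diffp w ?F"
  have lG: "lin_df n par r x ?G" using lin_diff[OF lin] lin_comb linS by blast
  have "\<forall>j<3*n+1. Lp n ?G j = 0" using c by (simp add: Lp_diff Lp_comb)
  note z = Lp_zero[OF this]
  note u = lin_unique[OF tree lG z]
  have eq: "stack n w \<rho> = (\<Sum>t\<in>S. c t * stack n (d t) \<rho>)" for \<rho>
    using stack_zero[OF z u, of \<rho>] by (simp add: stack_diff stack_comb)
  show ?thesis
  proof (intro exI allI impI)
    fix \<rho> :: nat
    have "(\<Sum>t<T. (if t \<in> S then c t else 0) * stack n (d t) \<rho>) = (\<Sum>t<T. if t \<in> S then c t * stack n (d t) \<rho> else 0)"
      by (rule sum.cong) auto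
    also have "\<dots> = (\<Sum>t\<in>{..<T} \<inter> S. c t * stack n (d t) \<rho>)" by (simp add: sum.inter_restrict)
    also have "{..<T} \<inter> S = S" using S(1) by blast
    finally show "stack n w \<rho> = (\<Sum>t<T. (if t \<in> S then c t else 0) * stack n (d t) \<rho>)" using eq by simp
  qed
qed



definition addp :: "df_point \<Rightarrow> df_point \<Rightarrow> df_point" where
  "addp a b = \<lparr>dp = \<lambda>i. dp a i + dp b i, dq = \<lambda>i. dq a i + dq b i,
     dP = \<lambda>i. dP a i + dP b i, dQ = \<lambda>i. dQ a i + dQ b i,
     dl = \<lambda>i. dl a i + dl b i, dv = \<lambda>i. dv a i + dv b i, dv0 = dv0 a + dv0 b\<rparr>"

lemma stack_add: "stack n (addp a b) \<rho> = stack n a \<rho> + stack n b \<rho>"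
  unfolding stack_def addp_def by simp

lemma key_ineq:
  fixes a b P Q v l s K e :: real
  assumes s: "s = v * l - (P\<^sup>2 + Q\<^sup>2)" "s > 0"
    and K: "K = \<bar>v\<bar> + \<bar>a*P + b*Q\<bar> + (a\<^sup>2 + b\<^sup>2)/4 + 1"
    and e: "e = min 1 (s / K)"
  shows "e > 0" "(P - a*e/2)\<^sup>2 + (Q - b*e/2)\<^sup>2 \<le> v * (l - e)"
proof -
  have "0 \<le> \<bar>v\<bar>" "0 \<le> \<bar>a*P + b*Q\<bar>" "0 \<le> (a\<^sup>2 + b\<^sup>2)/4" by auto
  then have Kp: "K > 0" using K by linarith
  show ep: "e > 0" using e s Kp by simp
  have e1: "e \<le> 1" using e by simp
  have eK: "e * K \<le> s" using e Kp
    by (metis min.cobounded2 pos_le_divide_eq)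
  have z0: "a\<^sup>2 + b\<^sup>2 \<ge> 0" by simp
  have t1: "e * (v - (a*P + b*Q)) \<le> e * (\<bar>v\<bar> + \<bar>a*P + b*Q\<bar>)"
    using ep by (intro mult_left_mono) auto
  have t2: "e\<^sup>2 * ((a\<^sup>2 + b\<^sup>2)/4) \<le> e * ((a\<^sup>2 + b\<^sup>2)/4)"
  proof -
    have "e\<^sup>2 \<le> e" using ep e1 by (simp add: power2_eq_square mult_le_cancel_left1)
    then show ?thesis using z0 by (intro mult_right_mono) auto
  qed
  have "(P - a*e/2)\<^sup>2 + (Q - b*e/2)\<^sup>2 - v * (l - e) = e * (v - (a*P + b*Q)) + e\<^sup>2 * ((a\<^sup>2 + b\<^sup>2)/4) - s"
    unfolding s(1) power2_eq_square by (simp add: field_simps)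
  also have "\<dots> \<le> e * K - e - s"
  proof -
    have "e * K - e = e * (\<bar>v\<bar> + \<bar>a*P + b*Q\<bar>) + e * ((a\<^sup>2 + b\<^sup>2)/4)"
      unfolding K by (simp add: algebra_simps)
    then show ?thesis using t1 t2 by linarith
  qed
  also have "\<dots> \<le> 0" using eK ep by simp
  finally show "(P - a*e/2)\<^sup>2 + (Q - b*e/2)\<^sup>2 \<le> v * (l - e)" by simp
qed

theorem lemma3:
  fixes n T :: nat and par :: "nat \<Rightarrow> nat" and r x pb qb :: "nat \<Rightarrow> real"
    and d :: "nat \<Rightarrow> df_point" and z :: df_point and g :: "nat \<Rightarrow> real"
  assumes tree: "is_tree n par"
    and rx: "\<forall>i\<in>{1..n}. r i \<ge> 0 \<and> x i \<ge> 0 \<and> (r i)\<^sup>2 + (x i)\<^sup>2 \<noteq> 0"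
    and T: "T > 1"
    and data: "\<forall>t<T. in_BDF n par r x (d t)"
    and rank: "mat_rank (6*n+1) T (\<lambda>t. stack n (d t)) = 3*n+1"
    and feas: "feasible n T d pb qb z g"
    and opt: "\<forall>z' g'. feasible n T d pb qb z' g' \<longrightarrow> objective n z \<le> objective n z'"
  shows "\<forall>i\<in>{1..n}. (dP z i)\<^sup>2 + (dQ z i)\<^sup>2 = dv z i * dl z i"
proof (rule ccontr)
  assume "\<not> ?thesis"
  then obtain i0 where i0: "i0 \<in> {1..n}" and ne: "(dP z i0)\<^sup>2 + (dQ z i0)\<^sup>2 \<noteq> dv z i0 * dl z i0" by blast
  have le: "(dP z i0)\<^sup>2 + (dQ z i0)\<^sup>2 \<le> dv z i0 * dl z i0" using feas i0 unfolding feasible_def by blast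
  define a where "a = r i0"
  define b where "b = x i0"
  define j where "j = par i0"
  have a0: "a \<ge> 0" and b0: "b \<ge> 0" using rx i0 a_def b_def by auto
  have jne: "j \<noteq> i0" using depth_par[OF tree i0] j_def by auto
  define s where "s = dv z i0 * dl z i0 - ((dP z i0)\<^sup>2 + (dQ z i0)\<^sup>2)"
  have sp: "s > 0" using le ne s_def by simp
  define K where "K = \<bar>dv z i0\<bar> + \<bar>a * dP z i0 + b * dQ z i0\<bar> + (a\<^sup>2 + b\<^sup>2)/4 + 1"
  define e where "e = min 1 (s / K)"
  note ki = key_ineq[OF s_def sp K_def e_def]
  have ep: "e > 0" using ki(1) .
  define D where "D = \<lparr>dp = \<lambda>k. if k = i0 then -a*e/2 else if k = j then -a*e/2 else 0,
     dq = \<lambda>k. if k = i0 then -b*e/2 else if k = j then -b*e/2 else 0,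
     dP = \<lambda>k. if k = i0 then -a*e/2 else 0, dQ = \<lambda>k. if k = i0 then -b*e/2 else 0,
     dl = \<lambda>k. if k = i0 then -e else 0, dv = \<lambda>k. 0, dv0 = 0\<rparr>"
  have linD: "lin_df n par r x D" unfolding lin_df_def
  proof (intro ballI conjI)
    fix i assume i: "i \<in> {1..n}"
    let ?K = "{k\<in>{1..n}. par k = i}"
    have fK: "finite ?K" by simp
    have inK: "i0 \<in> ?K \<longleftrightarrow> j = i" using i0 j_def by auto
    have "(\<Sum>k\<in>?K. dP D k - r k * dl D k) = (\<Sum>k\<in>?K. if k = i0 then a*e/2 else 0)"
      by (rule sum.cong) (auto simp: D_def a_def)
    also have "\<dots> = (if j = i then a*e/2 else 0)" using inK fK by (simp add: sum.delta)
    finally have s1: "(\<Sum>k\<in>?K. dP D k - r k * dl D k) = (if j = i then a*e/2 else 0)" .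
    show "dP D i = dp D i + (\<Sum>k\<in>?K. dP D k - r k * dl D k)"
      unfolding s1 using jne by (auto simp: D_def)
    have "(\<Sum>k\<in>?K. dQ D k - x k * dl D k) = (\<Sum>k\<in>?K. if k = i0 then b*e/2 else 0)"
      by (rule sum.cong) (auto simp: D_def b_def)
    also have "\<dots> = (if j = i then b*e/2 else 0)" using inK fK by (simp add: sum.delta)
    finally have s2: "(\<Sum>k\<in>?K. dQ D k - x k * dl D k) = (if j = i then b*e/2 else 0)" .
    show "dQ D i = dq D i + (\<Sum>k\<in>?K. dQ D k - x k * dl D k)"
      unfolding s2 using jne by (auto simp: D_def)
    have "volt D (par i) = 0" by (simp add: volt_def D_def)
    then show "volt D (par i) = dv D i - 2 * (r i * dP D i + x i * dQ D i) + ((r i)\<^sup>2 + (x i)\<^sup>2) * dl D i"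
      by (auto simp: D_def a_def b_def power2_eq_square algebra_simps)
  qed
  have dataL: "\<forall>t<T. lin_df n par r x (d t)" using data in_BDF_lin by blast
  obtain h where h: "\<forall>\<rho><6*n+1. stack n D \<rho> = (\<Sum>t<T. h t * stack n (d t) \<rho>)"
    using span_df[OF tree dataL rank linD] by blast
  define z' where "z' = addp z D"
  define g' where "g' = (\<lambda>t. g t + h t)"
  have fz: "\<forall>i\<in>{1..n}. dv z i \<ge> 0" "dv0 z = 1"
    "\<forall>\<rho><6*n+1. stack n z \<rho> = (\<Sum>t<T. g t * stack n (d t) \<rho>)"
    "\<forall>i\<in>{1..n}. dp z i \<le> pb i \<and> dq z i \<le> qb i"
    "\<forall>i\<in>{1..n}. (dP z i)\<^sup>2 + (dQ z i)\<^sup>2 \<le> dv z i * dl z i"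
    using feas unfolding feasible_def by blast+
  have "feasible n T d pb qb z' g'" unfolding feasible_def
  proof (intro conjI ballI allI impI)
    fix i assume i: "i \<in> {1..n}"
    show "dv z' i \<ge> 0" using fz(1) i by (simp add: z'_def addp_def D_def)
    have "dp D i \<le> 0" "dq D i \<le> 0" using a0 b0 ep by (auto simp: D_def)
    moreover have "dp z i \<le> pb i \<and> dq z i \<le> qb i" using fz(4) i by blast
    ultimately show "dp z' i \<le> pb i" "dq z' i \<le> qb i" by (auto simp: z'_def addp_def)
    show "(dP z' i)\<^sup>2 + (dQ z' i)\<^sup>2 \<le> dv z' i * dl z' i"
    proof (cases "i = i0")
      case True
      then show ?thesis using ki(2) by (simp add: z'_def addp_def D_def algebra_simps)
    next
      case False
      then show ?thesis using fz(5) i by (simp add: z'_def addp_def D_def)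
    qed
  next
    show "dv0 z' = 1" using fz(2) by (simp add: z'_def addp_def D_def)
  next
    fix \<rho> :: nat assume \<rho>: "\<rho> < 6*n+1"
    show "stack n z' \<rho> = (\<Sum>t<T. g' t * stack n (d t) \<rho>)"
      using fz(3) h \<rho> by (simp add: z'_def stack_add g'_def algebra_simps sum.distrib)
  qed
  then have "objective n z \<le> objective n z'" using opt by blast
  moreover have "objective n z' = objective n z - e"
  proof -
    have "objective n z' = (\<Sum>i=1..n. dl z i + (if i = i0 then -e else 0))"
      unfolding objective_def z'_def addp_def D_def by simp
    also have "\<dots> = objective n z - e" using i0 unfolding objective_def
      by (simp add: sum.distrib sum.delta)
    finally show ?thesis .
  qed
  ultimately show False using ep by simp
qed


end
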